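(* Let $A\in\mathbb{R}^{m\times n}$ have full row rank, $c\in\mathbb{R}^m$, and fix a block size $\tau$ with $m+1\le\tau\le n$; let $\mathcal{B}$ be the set of all subsets $b\subseteq\{1,\dots,n\}$ with $|b|=\tau$. Consider $\min\{F(x):=f(x)+h(x): Ax=c\}$, where $f:\mathbb{R}^n\to\mathbb{R}$ is differentiable and $h(x)=\sum_i h_i(x_i)$ with each $h_i:\mathbb{R}\to\mathbb{R}\cup\{+\infty\}$ proper and convex. Assume there is $L_2>0$ such that for every $x$ with $Ax=c$, every $b\in\mathcal{B}$ and every $d$ with $\mathrm{supp}(d)\subseteq b$ and $Ad=0$, $\|\nabla_b f(x+d)-\nabla_bf(x)\|_2\le L_2\|d\|_2$. Let $F^*=\inf\{F(x):Ax=c\}$ and assume there is $\mu_2>0$ such that for all $x$ with $Ax=c$, $h(x)<\infty$, \[ -L_2\min_{d:\ Ad=0}\Big\{\nabla f(x)^\top d+\tfrac{L_2}{2}\|d\|_2^2+h(x+d)-h(x)\Big\}\ge\mu_2\,(F(x)-F^* ). \] Let $x^0$ satisfy $Ax^0=c$, $h(x^0)<\infty$, and set $x^{k+1}=x^k+d^k$ where $(b^k,d^k)$ minimizes $\nabla f(x^k)^\top d+\frac{L_2}{2}\|d\|_2^2+h(x^k+d)-h(x^k)$ over all $b\in\mathcal{B}$ and all $d$ with $\mathrm{supp}(d)\subseteq b$ and $Ad=0$ (the GS-q rule). Then for all $k\ge0$, \[ F(x^k)-F^*\le\Big(1-\frac{\mu_2}{L_2(n-\tau+1)}\Big)^k\big(F(x^0)-F^*\big).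 \]
   Context: $\mathrm{supp}(d)=\{i:d_i\ne0\}$; $\nabla_b f$ denotes the vector of partial derivatives of $f$ with indices in $b$. The displayed assumption on $\mu_2$ is the proximal-PL condition in the 2-norm, $\frac12\mathcal{D}(x,L_2)\ge\mu_2(F(x)-F^* )$ with $\mathcal{D}(x,L)=-2L\min_{d:Ad=0}\{\nabla f(x)^\top d+\frac L2\|d\|_2^2+h(x+d)-h(x)\}$. *)

theory Defs
  imports "HOL-Analysis.Analysis" "HOL-Library.Extended_Real"
begin

definition supp :: "real^'n \<Rightarrow> 'n set" where
  "supp d = {i. d $ i \<noteq> 0}"

text \<open>Proper convex extended-valued function real to real union {+infinity}
  (values in ereal, never -infinity, not identically +infinity; convexity in
  the extended sense with the convention 0 * infinity = 0).\<close>
definition proper_convex_ext :: "(real \<Rightarrow> ereal) \<Rightarrow> bool" where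
  "proper_convex_ext \<phi> \<longleftrightarrow>
     (\<forall>t. \<phi> t \<noteq> -\<infinity>) \<and> (\<exists>t. \<phi> t \<noteq> \<infinity>) \<and>
     (\<forall>s t u. 0 \<le> u \<and> u \<le> 1 \<longrightarrow>
        \<phi> ((1 - u) * s + u * t) \<le> ereal (1 - u) * \<phi> s + ereal u * \<phi> t)"

definition hsep :: "('n::finite \<Rightarrow> real \<Rightarrow> ereal) \<Rightarrow> real^'n \<Rightarrow> ereal" where
  "hsep hi x = (\<Sum>i\<in>UNIV. hi i (x $ i))"

definition model :: "(real^'n \<Rightarrow> real^'n) \<Rightarrow> (real^'n \<Rightarrow> ereal) \<Rightarrow> real
                     \<Rightarrow> real^'n \<Rightarrow> real^'n \<Rightarrow> ereal" where
  "model g h L x d = ereal (g x \<bullet> d + L / 2 * (norm d)\<^sup>2) + h (x + d) - h x"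

end

theory Submission
  imports Defs
begin

lemma null_exists:
  fixes A :: "real^'n::finite^'m::finite"
  assumes "CARD('m) + 1 \<le> card T"
  shows "\<exists>w. w \<noteq> 0 \<and> A *v w = 0 \<and> (\<forall>i. i \<notin> T \<longrightarrow> w $ i = 0)"
proof (cases "inj_on (\<lambda>i. column i A) T")
  case False
  then obtain i i' where ii: "i \<in> T" "i' \<in> T" "i \<noteq> i'" "column i A = column i' A"
    unfolding inj_on_def by blast
  define w :: "real^'n" where "w = axis i 1 - axis i' 1"
  have "A *v w = 0" using ii by (simp add: w_def matrix_vector_mult_diff_distrib matrix_vector_mult_basis)
  moreover have "w $ i = 1" using ii by (simp add: w_def axis_def)
  moreover have "\<forall>j. j \<notin> T \<longrightarrow> w $ j = 0" using ii by (auto simp: w_def axis_def)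
  moreover have "w \<noteq> 0" using \<open>w $ i = 1\<close> by (auto simp: vec_eq_iff intro!: exI[of _ i])
  ultimately show ?thesis by blast
next
  case True
  define C where "C = (\<lambda>i. column i A) ` T"
  have fT: "finite T" by simp
  have cC: "card C = card T" using True by (simp add: C_def card_image)
  have "dependent C"
    by (rule dependent_biggerset) (use assms cC in auto)
  then obtain u where u: "\<exists>v\<in>C. u v \<noteq> 0" "(\<Sum>v\<in>C. u v *\<^sub>R v) = 0"
    using dependent_finite[of C] by (auto simp: C_def)
  define w :: "real^'n" where "w = (\<chi> i. if i \<in> T then u (column i A) else 0)"
  have "A *v w = (\<Sum>i\<in>UNIV. (w$i) *s column i A)" by (rule matrix_mult_sum)
  also have "\<dots> = (\<Sum>i\<in>T. u (column i A) *\<^sub>R column i A)"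
  proof -
    have "(\<Sum>i\<in>UNIV. (w$i) *s column i A) = (\<Sum>i\<in>UNIV. if i \<in> T then u (column i A) *\<^sub>R column i A else 0)"
      by (rule sum.cong) (auto simp: w_def scalar_mult_eq_scaleR)
    also have "\<dots> = (\<Sum>i\<in>T. u (column i A) *\<^sub>R column i A)"
      by (simp add: sum.If_cases)
    finally show ?thesis .
  qed
  also have "\<dots> = (\<Sum>v\<in>C. u v *\<^sub>R v)"
    unfolding C_def by (simp only: sum.reindex[OF True] o_def)
  finally have "A *v w = 0" using u by simp
  moreover obtain v where "v \<in> C" "u v \<noteq> 0" using u by blast
  then obtain i where "i \<in> T" "w $ i \<noteq> 0" by (auto simp: C_def w_def)
  moreover have "w \<noteq> 0" using \<open>w $ i \<noteq> 0\<close> by (auto simp: vec_eq_iff intro!: exI[of _ i])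
  ultimately show ?thesis by (intro exI[of _ w]) (auto simp: w_def)
qed

lemma coord_step:
  fixes vi wi di t :: real
  assumes t: "t > 0" and P: "wi * vi > 0 \<Longrightarrow> t \<le> vi / wi"
  shows "(vi - t * wi) * vi \<ge> 0"
proof (cases "wi * vi > 0")
  case True
  then have "wi \<noteq> 0" by auto
  from P[OF True] have "t * wi * vi \<le> vi / wi * wi * vi"
    using True by (metis mult.assoc mult_right_mono less_imp_le)
  also have "\<dots> = vi * vi" using \<open>wi \<noteq> 0\<close> by simp
  finally show ?thesis by (simp add: algebra_simps)
next
  case False
  then have "t * (wi * vi) \<le> 0" using t by (simp add: mult_nonneg_nonpos)
  moreover have "(vi - t * wi) * vi = vi * vi - t * (wi * vi)" by (simp add: algebra_simps)
  moreover have "vi * vi \<ge> 0" by simp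
  ultimately show ?thesis by linarith
qed

lemma sign_trans:
  fixes a b c :: real
  assumes "a * b > 0" "b * c > 0" shows "a * c > 0"
proof -
  have "(a*b)*(b*c) > 0" using assms by simp
  then have "(a*c)*(b*b) > 0" by (simp add: algebra_simps)
  then show ?thesis by (simp add: zero_less_mult_iff)
qed

lemma conf_small:
  fixes A :: "real^'n::finite^'m::finite" and d :: "real^'n"
  assumes tau: "CARD('m) + 1 \<le> \<tau>"
  shows "A *v v = 0 \<Longrightarrow> v \<noteq> 0 \<Longrightarrow> (\<forall>i. v$i \<noteq> 0 \<longrightarrow> v$i * d$i > 0) \<Longrightarrow>
    \<exists>v'. A *v v' = 0 \<and> v' \<noteq> 0 \<and> card (supp v') \<le> \<tau> \<and> (\<forall>i. v'$i \<noteq> 0 \<longrightarrow> v'$i * d$i > 0)"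
proof (induction "card (supp v)" arbitrary: v rule: less_induct)
  case less
  show ?case
  proof (cases "card (supp v) \<le> \<tau>")
    case True then show ?thesis using less.prems by blast
  next
    case False
    then have "supp v \<noteq> {}" by auto
    then obtain j where j: "v $ j \<noteq> 0" by (auto simp: supp_def)
    define T where "T = supp v - {j}"
    have jin: "j \<in> supp v" using j by (simp add: supp_def)
    have "card T = card (supp v) - 1" unfolding T_def using jin by (simp add: card_Diff_singleton)
    then have "CARD('m) + 1 \<le> card T" using False tau by linarith
    from null_exists[OF this, of A] obtain w0 where w0: "w0 \<noteq> 0" "A *v w0 = 0" "\<forall>i. i \<notin> T \<longrightarrow> w0 $ i = 0"
      by blast
    obtain i1 where i1: "w0 $ i1 \<noteq> 0" using w0(1) by (auto simp: vec_eq_iff)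
    then have "i1 \<in> T" using w0(3) by blast
    then have "v $ i1 \<noteq> 0" by (simp add: T_def supp_def)
    define w where "w = (if w0 $ i1 * v $ i1 > 0 then w0 else - w0)"
    have wT: "\<forall>i. i \<notin> T \<longrightarrow> w $ i = 0" using w0(3) by (simp add: w_def)
    have "A *v (- w0) = 0" using matrix_vector_mult_diff_distrib[of A 0 w0] w0(2) by simp
    then have Aw: "A *v w = 0" using w0(2) by (simp add: w_def)
    have "w $ i1 * v $ i1 > 0" using i1 \<open>v $ i1 \<noteq> 0\<close>
      by (auto simp: w_def mult_less_0_iff zero_less_mult_iff linorder_neq_iff)
    define P where "P = {i. w $ i * v $ i > 0}"
    have Pne: "P \<noteq> {}" "finite P" using \<open>w $ i1 * v $ i1 > 0\<close> by (auto simp: P_def)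
    define t where "t = Min ((\<lambda>i. v $ i / w $ i) ` P)"
    have "t \<in> (\<lambda>i. v $ i / w $ i) ` P" unfolding t_def using Pne by (intro Min_in) auto
    then obtain i0 where i0: "i0 \<in> P" "t = v $ i0 / w $ i0" by blast
    have tle: "\<And>i. i \<in> P \<Longrightarrow> t \<le> v $ i / w $ i" unfolding t_def using Pne by simp
    have tpos: "t > 0" using i0 by (simp add: P_def zero_less_divide_iff zero_less_mult_iff) blast
    define v' where "v' = v - t *\<^sub>R w"
    have c1: "\<And>i. v' $ i * v $ i \<ge> 0"
      unfolding v'_def using coord_step[OF tpos] tle by (simp add: P_def)
    have c2: "v' $ i0 = 0" using i0 by (auto simp: v'_def P_def)
    have c3: "v' $ j = v $ j" using wT by (simp add: v'_def T_def)
    have c4: "\<And>i. v $ i = 0 \<Longrightarrow> v' $ i = 0" using wT by (simp add: v'_def T_def supp_def)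
    have "A *v (t *\<^sub>R w) = 0" using Aw by (simp add: matrix_vector_mult_scaleR)
    then have Av': "A *v v' = 0" using less.prems(1)
      by (simp add: v'_def matrix_vector_mult_diff_distrib)
    have v'ne: "v' \<noteq> 0" using c3 j by (auto simp: vec_eq_iff intro!: exI[of _ j])
    have conf: "\<forall>i. v'$i \<noteq> 0 \<longrightarrow> v'$i * d$i > 0"
    proof (intro allI impI)
      fix i assume "v' $ i \<noteq> 0"
      then have "v $ i \<noteq> 0" using c4 by blast
      then have "v $ i * d $ i > 0" using less.prems(3) by blast
      moreover have "v' $ i * v $ i > 0" using c1[of i] \<open>v' $ i \<noteq> 0\<close> \<open>v $ i \<noteq> 0\<close>
        by (simp add: order_le_less)
      ultimately show "v'$i * d$i > 0" using sign_trans by blast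
    qed
    have "supp v' \<subseteq> supp v - {i0}" using c2 c4 by (auto simp: supp_def)
    moreover have "i0 \<in> supp v" using i0 by (auto simp: P_def supp_def)
    ultimately have "supp v' \<subset> supp v" by blast
    then have "card (supp v') < card (supp v)" by (intro psubset_card_mono) auto
    from less.hyps[OF this Av' v'ne conf] show ?thesis .
  qed
qed

lemma sign_nonneg:
  fixes r d v :: real
  assumes "r * d \<ge> 0" "v * d > 0" shows "r * v \<ge> 0"
proof -
  have "(r * d) * (v * d) \<ge> 0" using assms by simp
  then have "(r * v) * (d * d) \<ge> 0" by (simp add: algebra_simps)
  moreover have "d \<noteq> 0" using assms(2) by auto
  then have "d * d > 0" by (auto simp: zero_less_mult_iff linorder_neq_iff)
  ultimately show ?thesis by (simp add: zero_le_mult_iff)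
qed

lemma combine_arith:
  fixes sd sr mp me mr md :: real
  assumes "sd \<ge> 1 + sr" "sr \<ge> 0" "me \<le> 0" "sr * me \<le> mr" "mp + mr \<le> md" "mp \<le> me"
  shows "sd * mp \<le> md"
proof -
  have "sd * mp \<le> (1 + sr) * mp" using assms by (intro mult_right_mono_neg) auto
  also have "\<dots> = mp + sr * mp" by (simp add: algebra_simps)
  also have "sr * mp \<le> sr * me" using assms by (intro mult_left_mono) auto
  finally show ?thesis using assms by linarith
qed

lemma combine_arith2:
  fixes sd sr mp me mr md :: real
  assumes "sd \<ge> 1 + sr" "sr \<ge> 0" "me \<le> 0" "sr * me \<le> mr" "mp + mr \<le> md" "me \<le> mp"
  shows "sd * me \<le> md"
proof -
  have "sd * me \<le> (1 + sr) * me" using assms by (intro mult_right_mono_neg) auto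
  also have "\<dots> = me + sr * me" by (simp add: algebra_simps)
  finally show ?thesis using assms by linarith
qed

lemma decomp:
  fixes A :: "real^'n::finite^'m::finite" and P :: "real^'n \<Rightarrow> bool" and m :: "real^'n \<Rightarrow> real"
  assumes tau: "CARD('m) + 1 \<le> \<tau>"
    and P0: "P 0" and m0: "m 0 = 0"
    and sup: "\<And>a b. (\<forall>i. a$i * b$i \<ge> 0) \<Longrightarrow> P (a + b) \<Longrightarrow> P a \<and> P b \<and> m a + m b \<le> m (a + b)"
  shows "A *v d = 0 \<Longrightarrow> P d \<Longrightarrow> \<exists>e. A *v e = 0 \<and> card (supp e) \<le> \<tau> \<and> P e \<and> m e \<le> 0 \<and>
            real (max 1 (card (supp d) + 1 - \<tau>)) * m e \<le> m d"
proof (induction "card (supp d)" arbitrary: d rule: less_induct)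
  case less
  show ?case
  proof (cases "card (supp d) \<le> \<tau>")
    case True
    then have s1: "max 1 (card (supp d) + 1 - \<tau>) = 1" by simp
    show ?thesis
    proof (cases "m d \<le> 0")
      case True then show ?thesis using less.prems \<open>card (supp d) \<le> \<tau>\<close> s1 by (intro exI[of _ d]) auto
    next
      case False
      have "supp (0::real^'n) = {}" by (simp add: supp_def)
      then show ?thesis using False P0 m0 s1 by (intro exI[of _ 0]) auto
    qed
  next
    case False
    then have "d \<noteq> 0" by (auto simp: supp_def)
    have "\<forall>i. d$i \<noteq> 0 \<longrightarrow> d$i * d$i > 0" by (auto simp: zero_less_mult_iff linorder_neq_iff)
    from conf_small[OF tau less.prems(1) \<open>d \<noteq> 0\<close> this]
    obtain v where v: "A *v v = 0" "v \<noteq> 0" "card (supp v) \<le> \<tau>" "\<forall>i. v$i \<noteq> 0 \<longrightarrow> v$i * d$i > 0"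
      by blast
    define Q where "Q = supp v"
    have Qne: "Q \<noteq> {}" "finite Q" using v(2) by (auto simp: Q_def supp_def vec_eq_iff)
    define t where "t = Min ((\<lambda>i. d $ i / v $ i) ` Q)"
    have "t \<in> (\<lambda>i. d $ i / v $ i) ` Q" unfolding t_def using Qne by (intro Min_in) auto
    then obtain i0 where i0: "i0 \<in> Q" "t = d $ i0 / v $ i0" by blast
    have tle: "\<And>i. i \<in> Q \<Longrightarrow> t \<le> d $ i / v $ i" unfolding t_def using Qne by simp
    have vd0: "v $ i0 * d $ i0 > 0" using i0 v(4) by (simp add: Q_def supp_def)
    then have tpos: "t > 0" using i0 by (simp add: zero_less_divide_iff zero_less_mult_iff) blast
    define p where "p = t *\<^sub>R v"
    define r where "r = d - p"
    have dpr: "d = p + r" by (simp add: r_def)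
    have c1: "\<And>i. r $ i * d $ i \<ge> 0"
    proof -
      fix i
      have "v $ i * d $ i > 0 \<Longrightarrow> t \<le> d $ i / v $ i"
        using tle v(4) by (simp add: Q_def supp_def) (metis mult_eq_0_iff order_less_irrefl)
      from coord_step[OF tpos this] show "r $ i * d $ i \<ge> 0" by (simp add: r_def p_def)
    qed
    have conf: "\<forall>i. p$i * r$i \<ge> 0"
    proof
      fix i
      show "p$i * r$i \<ge> 0"
      proof (cases "v $ i = 0")
        case True then show ?thesis by (simp add: p_def)
      next
        case False
        then have "v $ i * d $ i > 0" using v(4) by blast
        from sign_nonneg[OF c1 this] have "r $ i * v $ i \<ge> 0" .
        then show ?thesis using tpos by (simp add: p_def algebra_simps)
      qed
    qed
    have Pp: "P p" "P r" "m p + m r \<le> m d" using sup[OF conf] less.prems(2) dpr by auto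
    have Ap: "A *v p = 0" using v(1) by (simp add: p_def matrix_vector_mult_scaleR)
    have Ar: "A *v r = 0" using Ap less.prems(1) by (simp add: r_def matrix_vector_mult_diff_distrib)
    have suppp: "supp p = supp v" using tpos by (simp add: p_def supp_def)
    have r0: "r $ i0 = 0" using i0 vd0 by (auto simp: r_def p_def)
    have rsub: "supp r \<subseteq> supp d - {i0}"
    proof
      fix i assume "i \<in> supp r"
      then have "r $ i \<noteq> 0" by (simp add: supp_def)
      moreover have "d $ i = 0 \<Longrightarrow> v $ i = 0" using v(4) by fastforce
      ultimately have "d $ i \<noteq> 0" by (auto simp: r_def p_def)
      then show "i \<in> supp d - {i0}" using r0 \<open>r $ i \<noteq> 0\<close> by (auto simp: supp_def)
    qed
    have "i0 \<in> supp d" using vd0 by (auto simp: supp_def)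
    then have "supp r \<subset> supp d" using rsub by blast
    then have crd: "card (supp r) < card (supp d)" by (intro psubset_card_mono) auto
    from less.hyps[OF crd Ar Pp(2)] obtain er where
      er: "A *v er = 0" "card (supp er) \<le> \<tau>" "P er" "m er \<le> 0"
          "real (max 1 (card (supp r) + 1 - \<tau>)) * m er \<le> m r" by blast
    define sr where "sr = real (max 1 (card (supp r) + 1 - \<tau>))"
    define sd where "sd = real (max 1 (card (supp d) + 1 - \<tau>))"
    have ssr: "sd \<ge> 1 + sr" "sr \<ge> 0" using crd False by (auto simp: sr_def sd_def)
    show ?thesis
    proof (cases "m p \<le> m er")
      case True
      have "sd * m p \<le> m d"
        by (rule combine_arith[OF ssr er(4) _ Pp(3) True]) (use er(5) in \<open>simp add: sr_def\<close>)
      then show ?thesis using Ap suppp v(3) Pp(1) True er(4) by (intro exI[of _ p]) (auto simp: sd_def)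
    next
      case False
      have "sd * m er \<le> m d"
        by (rule combine_arith2[OF ssr er(4) _ Pp(3)]) (use er(5) False in \<open>auto simp add: sr_def\<close>)
      then show ?thesis using er by (intro exI[of _ er]) (auto simp: sd_def)
    qed
  qed
qed

lemma ereal_le_realD: "x \<noteq> -\<infinity> \<Longrightarrow> x \<le> ereal X \<Longrightarrow> x < \<infinity> \<and> real_of_ereal x \<le> X"
  by (cases x) auto

lemma conv_half:
  assumes pc: "proper_convex_ext \<phi>" and u: "0 \<le> u" "u \<le> 1"
    and fs: "\<phi> s = ereal P" and ft: "\<phi> t = ereal Q"
  shows "\<phi> ((1 - u) * s + u * t) < \<infinity> \<and> real_of_ereal (\<phi> ((1 - u) * s + u * t)) \<le> (1 - u) * P + u * Q"
proof -
  have "\<phi> ((1 - u) * s + u * t) \<le> ereal (1 - u) * \<phi> s + ereal u * \<phi> t"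
    using pc u unfolding proper_convex_ext_def by blast
  also have "\<dots> = ereal ((1 - u) * P + u * Q)" using fs ft by simp
  finally show ?thesis using pc unfolding proper_convex_ext_def by (intro ereal_le_realD) auto
qed

lemma conv_sup1:
  assumes pc: "proper_convex_ext \<phi>" and f0: "\<phi> t < \<infinity>" and f1: "\<phi> (t + a + b) < \<infinity>" and ab: "a * b \<ge> 0"
  shows "\<phi> (t + a) < \<infinity> \<and> \<phi> (t + b) < \<infinity> \<and>
     real_of_ereal (\<phi> (t + a)) + real_of_ereal (\<phi> (t + b)) \<le> real_of_ereal (\<phi> t) + real_of_ereal (\<phi> (t + a + b))"
proof -
  have nm: "\<And>y. \<phi> y \<noteq> -\<infinity>" using pc unfolding proper_convex_ext_def by blast
  define P where "P = real_of_ereal (\<phi> t)"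
  define Q where "Q = real_of_ereal (\<phi> (t + a + b))"
  have fP: "\<phi> t = ereal P" using f0 nm[of t] unfolding P_def by (cases "\<phi> t") auto
  have fQ: "\<phi> (t + a + b) = ereal Q" using f1 nm[of "t+a+b"] unfolding Q_def by (cases "\<phi> (t+a+b)") auto
  show ?thesis
  proof (cases "a = 0 \<or> b = 0")
    case True
    then show ?thesis using f0 f1 by (auto simp: add.commute)
  next
    case False
    then have "a + b \<noteq> 0" using ab by (auto simp: zero_le_mult_iff)
    define u where "u = a / (a + b)"
    have "a / (a + b) \<ge> 0" using ab False by (auto simp: zero_le_mult_iff zero_le_divide_iff)
    moreover have "b / (a + b) \<ge> 0" using ab False by (auto simp: zero_le_mult_iff zero_le_divide_iff)
    moreover have "a / (a + b) + b / (a + b) = 1" using \<open>a + b \<noteq> 0\<close> by (simp add: add_divide_distrib[symmetric])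
    ultimately have u01: "0 \<le> u" "u \<le> 1" "1 - u = b / (a + b)" unfolding u_def by auto
    have "u * (a + b) = a" using \<open>a + b \<noteq> 0\<close> by (simp add: u_def)
    then have e1: "(1 - u) * t + u * (t + a + b) = t + a"
      by (simp add: algebra_simps)
    have "(1 - u) * (a + b) = b" using \<open>a + b \<noteq> 0\<close> u01(3) by simp
    then have e2: "(1 - (1 - u)) * t + (1 - u) * (t + a + b) = t + b"
      by (simp add: algebra_simps)
    have A1: "\<phi> (t + a) < \<infinity> \<and> real_of_ereal (\<phi> (t + a)) \<le> (1 - u) * P + u * Q"
      using conv_half[OF pc u01(1,2) fP fQ] e1 by simp
    have A2: "\<phi> (t + b) < \<infinity> \<and> real_of_ereal (\<phi> (t + b)) \<le> (1 - (1 - u)) * P + (1 - u) * Q"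
      using conv_half[OF pc _ _ fP fQ, of "1 - u"] u01 e2 by simp
    show ?thesis using A1 A2 by (simp add: P_def Q_def algebra_simps)
  qed
qed

definition Hr :: "('n::finite \<Rightarrow> real \<Rightarrow> ereal) \<Rightarrow> real^'n \<Rightarrow> real" where
  "Hr hi y = (\<Sum>i\<in>UNIV. real_of_ereal (hi i (y $ i)))"

lemma hsep_fin:
  assumes "\<And>i. proper_convex_ext (hi i)"
  shows "hsep hi y < \<infinity> \<longleftrightarrow> (\<forall>i. hi i (y $ i) < \<infinity>)"
proof -
  have "hsep hi y = \<infinity> \<longleftrightarrow> (\<exists>i. hi i (y $ i) = \<infinity>)"
    unfolding hsep_def by (simp add: sum_Pinfty)
  moreover have "\<And>z::ereal. z < \<infinity> \<longleftrightarrow> z \<noteq> \<infinity>" by (case_tac z) auto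
  ultimately show ?thesis by auto
qed

lemma hsep_real:
  assumes "\<And>i. proper_convex_ext (hi i)" "hsep hi y < \<infinity>"
  shows "hsep hi y = ereal (Hr hi y)"
proof -
  have fin: "\<And>i. hi i (y $ i) < \<infinity>" using hsep_fin[where hi=hi, OF assms(1)] assms(2) by blast
  have nm: "\<And>i. hi i (y $ i) \<noteq> -\<infinity>" using assms(1) unfolding proper_convex_ext_def by blast
  have "hsep hi y = (\<Sum>i\<in>UNIV. ereal (real_of_ereal (hi i (y $ i))))"
    unfolding hsep_def
  proof (rule sum.cong[OF refl])
    fix i show "hi i (y $ i) = ereal (real_of_ereal (hi i (y $ i)))"
      using fin[of i] nm[of i] by (cases "hi i (y $ i)") auto
  qed
  then show ?thesis by (simp add: Hr_def)
qed

lemma Hr_sup: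
  assumes pc: "\<And>i. proper_convex_ext (hi i)" and f0: "hsep hi x < \<infinity>" and f1: "hsep hi (x + a + b) < \<infinity>"
    and ab: "\<forall>i. a $ i * b $ i \<ge> 0"
  shows "hsep hi (x + a) < \<infinity> \<and> hsep hi (x + b) < \<infinity> \<and> Hr hi (x + a) + Hr hi (x + b) \<le> Hr hi x + Hr hi (x + a + b)"
proof -
  have c: "hi i (x$i + a$i) < \<infinity> \<and> hi i (x$i + b$i) < \<infinity> \<and>
     real_of_ereal (hi i (x$i + a$i)) + real_of_ereal (hi i (x$i + b$i)) \<le> real_of_ereal (hi i (x$i)) + real_of_ereal (hi i (x$i + a$i + b$i))" for i
  proof -
    have "hi i (x $ i) < \<infinity>" "hi i ((x + a + b) $ i) < \<infinity>" using f0 f1 hsep_fin[where hi=hi, OF pc] by blast+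
    then show ?thesis using conv_sup1[OF pc[of i], of "x$i" "a$i" "b$i"] ab by simp
  qed
  have "hsep hi (x + a) < \<infinity>" "hsep hi (x + b) < \<infinity>" using c hsep_fin[where hi=hi, OF pc] by auto
  moreover have "Hr hi (x + a) + Hr hi (x + b) \<le> Hr hi x + Hr hi (x + a + b)"
    unfolding Hr_def sum.distrib[symmetric] by (rule sum_mono) (use c in simp)
  ultimately show ?thesis by blast
qed

lemma norm_on_block:
  fixes e :: "real^'n::finite"
  assumes "supp e \<subseteq> bb"
  shows "L2_set (\<lambda>i. e $ i) bb = norm e"
proof -
  have "norm e = L2_set (\<lambda>i. e $ i) UNIV" by (simp add: norm_vec_def L2_set_def)
  also have "\<dots> = L2_set (\<lambda>i. e $ i) bb"
    unfolding L2_set_def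
    by (rule arg_cong[where f=sqrt], rule sum.mono_neutral_right) (use assms in \<open>auto simp: supp_def\<close>)
  finally show ?thesis by simp
qed

lemma inner_on_block:
  fixes e z :: "real^'n::finite"
  assumes "supp e \<subseteq> bb"
  shows "z \<bullet> e \<le> L2_set (\<lambda>i. z $ i) bb * norm e"
proof -
  have "z \<bullet> e = (\<Sum>i\<in>UNIV. z $ i * e $ i)" by (simp add: inner_vec_def)
  also have "\<dots> = (\<Sum>i\<in>bb. z $ i * e $ i)"
    by (rule sum.mono_neutral_right) (use assms in \<open>auto simp: supp_def\<close>)
  also have "\<dots> \<le> (\<Sum>i\<in>bb. \<bar>z $ i\<bar> * \<bar>e $ i\<bar>)"
    by (rule sum_mono) (simp add: abs_mult[symmetric])
  also have "\<dots> \<le> L2_set (\<lambda>i. z $ i) bb * L2_set (\<lambda>i. e $ i) bb" by (rule L2_set_mult_ineq)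
  finally show ?thesis using norm_on_block[OF assms] by simp
qed

lemma descent:
  fixes f :: "real^'n::finite \<Rightarrow> real" and g :: "real^'n \<Rightarrow> real^'n"
  assumes grad: "\<And>y. GDERIV f y :> g y"
    and lipb: "\<And>t. 0 \<le> t \<Longrightarrow> t \<le> 1 \<Longrightarrow> L2_set (\<lambda>i. g (y + t *\<^sub>R e) $ i - g y $ i) bb \<le> L * norm (t *\<^sub>R e)"
    and se: "supp e \<subseteq> bb"
  shows "f (y + e) \<le> f y + g y \<bullet> e + L / 2 * (norm e)\<^sup>2"
proof -
  define \<phi> where "\<phi> = (\<lambda>t. f (y + t *\<^sub>R e) - t * (g y \<bullet> e) - L / 2 * t\<^sup>2 * (norm e)\<^sup>2)"
  have d1: "((\<lambda>t. f (y + t *\<^sub>R e)) has_real_derivative (g (y + t *\<^sub>R e) \<bullet> e)) (at t)" for t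
  proof -
    have a: "((\<lambda>t. y + t *\<^sub>R e) has_derivative (\<lambda>s. s *\<^sub>R e)) (at t)" by (auto intro!: derivative_eq_intros)
    have b: "(f has_derivative (\<lambda>h. h \<bullet> g (y + t *\<^sub>R e))) (at (y + t *\<^sub>R e))" using grad unfolding gderiv_def .
    have "((\<lambda>t. f (y + t *\<^sub>R e)) has_derivative (\<lambda>s. (s *\<^sub>R e) \<bullet> g (y + t *\<^sub>R e))) (at t)"
      using has_derivative_compose[OF a b] .
    then show ?thesis unfolding has_field_derivative_def
      by (rule has_derivative_eq_rhs) (auto simp: fun_eq_iff inner_commute)
  qed
  have d2: "DERIV \<phi> t :> (g (y + t *\<^sub>R e) \<bullet> e - g y \<bullet> e - L * t * (norm e)\<^sup>2)" for t
    unfolding \<phi>_def by (auto intro!: derivative_eq_intros d1 simp: power2_eq_square)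
  have neg: "g (y + t *\<^sub>R e) \<bullet> e - g y \<bullet> e - L * t * (norm e)\<^sup>2 \<le> 0" if "0 \<le> t" "t \<le> 1" for t
  proof -
    have "g (y + t *\<^sub>R e) \<bullet> e - g y \<bullet> e = (g (y + t *\<^sub>R e) - g y) \<bullet> e" by (simp add: inner_diff_left)
    also have "\<dots> \<le> L2_set (\<lambda>i. (g (y + t *\<^sub>R e) - g y) $ i) bb * norm e" by (rule inner_on_block[OF se])
    also have "\<dots> \<le> (L * norm (t *\<^sub>R e)) * norm e"
      using lipb[OF that] by (intro mult_right_mono) auto
    also have "\<dots> = L * t * (norm e)\<^sup>2" using that by (simp add: power2_eq_square)
    finally show ?thesis by simp
  qed
  have "\<phi> 1 \<le> \<phi> 0"
  proof (rule DERIV_nonpos_imp_nonincreasing[of 0 1])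
    fix x :: real assume "0 \<le> x" "x \<le> 1"
    then show "\<exists>y. DERIV \<phi> x :> y \<and> y \<le> 0" using d2[of x] neg[of x] by blast
  qed simp
  then show ?thesis by (simp add: \<phi>_def)
qed

lemma arith_final:
  fixes L N md Ir mu E E' :: real
  assumes "L > 0" "N > 0" "N * md \<le> Ir" "mu * E \<le> - L * Ir" "E' \<le> E + md"
  shows "E' \<le> (1 - mu / (L * N)) * E"
proof -
  have "md \<le> Ir / N" using assms by (simp add: field_simps)
  moreover have "Ir \<le> - (mu * E) / L" using assms by (simp add: field_simps)
  ultimately have "md \<le> - (mu * E) / L / N" using assms by (smt (verit) divide_right_mono)
  moreover have "(1 - mu / (L * N)) * E = E - (mu * E) / L / N" using assms by (simp add: field_simps)
  ultimately show ?thesis using assms by linarith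
qed

lemma norm_add_sq:
  fixes a b :: "real^'n::finite"
  assumes "\<forall>i. a $ i * b $ i \<ge> 0"
  shows "(norm a)\<^sup>2 + (norm b)\<^sup>2 \<le> (norm (a + b))\<^sup>2"
proof -
  have "a \<bullet> b \<ge> 0" unfolding inner_vec_def using assms by (intro sum_nonneg) simp
  moreover have "(norm (a + b))\<^sup>2 = (norm a)\<^sup>2 + (norm b)\<^sup>2 + 2 * (a \<bullet> b)"
    by (simp add: power2_norm_eq_inner inner_add_left inner_add_right inner_commute)
  ultimately show ?thesis by linarith
qed

lemma one_step:
  fixes A :: "real^'n::finite^'m::finite" and c :: "real^'m" and \<tau> :: nat
    and f :: "real^'n \<Rightarrow> real" and g :: "real^'n \<Rightarrow> real^'n" and hi :: "'n \<Rightarrow> real \<Rightarrow> ereal"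
    and L2 \<mu>2 :: real and Fstar :: ereal and x dk :: "real^'n" and bk :: "'n set"
  assumes tau_lo: "CARD('m) + 1 \<le> \<tau>"
    and tau_hi: "\<tau> \<le> CARD('n)"
    and grad: "\<And>y. GDERIV f y :> g y"
    and hi_pc: "\<And>i. proper_convex_ext (hi i)"
    and L2_pos: "L2 > 0" and mu2_pos: "\<mu>2 > 0"
    and lip: "\<And>y bb e. A *v y = c \<Longrightarrow> card bb = \<tau> \<Longrightarrow> supp e \<subseteq> bb \<Longrightarrow> A *v e = 0 \<Longrightarrow>
               L2_set (\<lambda>i. g (y + e) $ i - g y $ i) bb \<le> L2 * norm e"
    and Fstar_def: "Fstar = Inf {ereal (f y) + hsep hi y | y. A *v y = c}"
    and PL: "ereal (- L2) * Inf {model g (hsep hi) L2 x e | e. A *v e = 0}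
                 \<ge> ereal \<mu>2 * (ereal (f x) + hsep hi x - Fstar)"
    and xf: "A *v x = c" and xd: "hsep hi x < \<infinity>"
    and bk: "card bk = \<tau>" and dsupp: "supp dk \<subseteq> bk" and dnull: "A *v dk = 0"
    and gsq: "\<And>bb e. card bb = \<tau> \<Longrightarrow> supp e \<subseteq> bb \<Longrightarrow> A *v e = 0 \<Longrightarrow>
               model g (hsep hi) L2 x dk \<le> model g (hsep hi) L2 x e"
  shows "A *v (x + dk) = c \<and> hsep hi (x + dk) < \<infinity> \<and> Fstar = ereal (real_of_ereal Fstar) \<and>
    f (x + dk) + Hr hi (x + dk) - real_of_ereal Fstar \<le> (1 - \<mu>2 / (L2 * real (CARD('n) - \<tau> + 1))) * (f x + Hr hi x - real_of_ereal Fstar) \<and>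
    0 \<le> f (x + dk) + Hr hi (x + dk) - real_of_ereal Fstar \<and>
    (0 < f x + Hr hi x - real_of_ereal Fstar \<longrightarrow> 0 \<le> 1 - \<mu>2 / (L2 * real (CARD('n) - \<tau> + 1)))"
proof -
  define N where "N = real (CARD('n) - \<tau> + 1)"
  have Npos: "N \<ge> 1" by (simp add: N_def)
  define hx where "hx = Hr hi x"
  have hxe: "hsep hi x = ereal hx" unfolding hx_def by (rule hsep_real[OF hi_pc xd])
  define mr where "mr = (\<lambda>u. g x \<bullet> u + L2 / 2 * (norm u)\<^sup>2 + Hr hi (x + u) - hx)"
  have model_fin: "model g (hsep hi) L2 x u = ereal (mr u)" if "hsep hi (x + u) < \<infinity>" for u
    using hsep_real[OF hi_pc that] hxe by (simp add: model_def mr_def)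
  have model_inf: "model g (hsep hi) L2 x u = \<infinity>" if "\<not> hsep hi (x + u) < \<infinity>" for u
  proof -
    have "hsep hi (x + u) = \<infinity>" using that by (simp add: not_less top_ereal_def[symmetric]) (metis top.extremum_unique top_ereal_def)
    then show ?thesis using hxe by (simp add: model_def)
  qed
  have m00: "mr 0 = 0" by (simp add: mr_def hx_def)
  have mod0: "model g (hsep hi) L2 x 0 = 0" using model_fin[of 0] xd m00 by (simp add: zero_ereal_def)
  have supp0: "supp (0::real^'n) = {}" by (simp add: supp_def)
  have "model g (hsep hi) L2 x dk \<le> 0" using gsq[OF bk, of 0] supp0 mod0 by simp
  then have dkd: "hsep hi (x + dk) < \<infinity>"
  proof (rule contrapos_pp)
    assume "\<not> hsep hi (x + dk) < \<infinity>"
    then show "\<not> model g (hsep hi) L2 x dk \<le> 0" using model_inf[of dk] by simp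
  qed
  define md where "md = mr dk"
  have mdk: "model g (hsep hi) L2 x dk = ereal md" using model_fin[OF dkd] by (simp add: md_def)
  have sup: "hsep hi (x + a) < \<infinity> \<and> hsep hi (x + b) < \<infinity> \<and> mr a + mr b \<le> mr (a + b)"
    if ab: "\<forall>i. a$i * b$i \<ge> 0" and P: "hsep hi (x + (a + b)) < \<infinity>" for a b
  proof -
    have H: "hsep hi (x + a) < \<infinity> \<and> hsep hi (x + b) < \<infinity> \<and> Hr hi (x + a) + Hr hi (x + b) \<le> Hr hi x + Hr hi (x + a + b)"
      using Hr_sup[OF hi_pc xd _ ab] P by (simp add: add.assoc)
    have "L2 / 2 * ((norm a)\<^sup>2 + (norm b)\<^sup>2) \<le> L2 / 2 * (norm (a + b))\<^sup>2"
      using norm_add_sq[OF ab] L2_pos by (intro mult_left_mono) auto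
    then show ?thesis using H by (simp add: mr_def hx_def inner_add_right algebra_simps add.assoc)
  qed
  have key: "ereal N * model g (hsep hi) L2 x dk \<le> model g (hsep hi) L2 x d" if dA: "A *v d = 0" for d
  proof (cases "hsep hi (x + d) < \<infinity>")
    case False then show ?thesis using model_inf[OF False] by simp
  next
    case True
    have "\<exists>e. A *v e = 0 \<and> card (supp e) \<le> \<tau> \<and> hsep hi (x + e) < \<infinity> \<and> mr e \<le> 0 \<and>
            real (max 1 (card (supp d) + 1 - \<tau>)) * mr e \<le> mr d"
      by (rule decomp[where P="\<lambda>u. hsep hi (x + u) < \<infinity>" and m=mr, OF tau_lo _ m00 sup dA True])
         (use xd in auto)
    then obtain e where e: "A *v e = 0" "card (supp e) \<le> \<tau>" "hsep hi (x + e) < \<infinity>" "mr e \<le> 0"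
        "real (max 1 (card (supp d) + 1 - \<tau>)) * mr e \<le> mr d" by blast
    obtain bb where bb: "supp e \<subseteq> bb" "card bb = \<tau>"
      using exists_subset_between[of "supp e" \<tau> UNIV] e(2) tau_hi by auto
    have "card (supp d) \<le> CARD('n)" by (rule card_mono) auto
    then have "real (max 1 (card (supp d) + 1 - \<tau>)) \<le> N" unfolding N_def using tau_hi by auto
    then have "N * mr e \<le> real (max 1 (card (supp d) + 1 - \<tau>)) * mr e"
      using e(4) by (intro mult_right_mono_neg) auto
    then have "N * mr e \<le> mr d" using e(5) by linarith
    moreover have "md \<le> mr e" using gsq[OF bb(2) bb(1) e(1)] mdk model_fin[OF e(3)] by simp
    then have "N * md \<le> N * mr e" using Npos by (intro mult_left_mono) auto
    ultimately show ?thesis using mdk model_fin[OF True] by simp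
  qed
  define I where "I = Inf {model g (hsep hi) L2 x e | e. A *v e = 0}"
  have I1: "ereal (N * md) \<le> I" unfolding I_def using key mdk by (auto intro!: Inf_greatest)
  have I2: "I \<le> 0" unfolding I_def using mod0 by (intro Inf_lower2[of 0]) auto
  obtain Ir where Ir: "I = ereal Ir" using I1 I2 by (cases I) auto
  have NmdIr: "N * md \<le> Ir" using I1 Ir by simp
  have Fle: "Fstar \<le> ereal (f y) + hsep hi y" if "A *v y = c" for y
    unfolding Fstar_def using that by (intro Inf_lower) auto
  have Fx: "ereal (f x) + hsep hi x = ereal (f x + hx)" using hxe by simp
  have Fsle: "Fstar \<le> ereal (f x + hx)" using Fle[OF xf] Fx by simp
  have PL': "ereal \<mu>2 * (ereal (f x + hx) - Fstar) \<le> ereal (- L2 * Ir)"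
    using PL Fx Ir unfolding I_def by simp
  obtain Fs where Fs: "Fstar = ereal Fs"
  proof (cases Fstar)
    case (real r) then show ?thesis using that by blast
  next
    case PInf then show ?thesis using Fsle by simp
  next
    case MInf then show ?thesis using PL' mu2_pos by simp
  qed
  have Fsr: "Fstar = ereal (real_of_ereal Fstar)" "real_of_ereal Fstar = Fs" using Fs by auto
  have lipb: "L2_set (\<lambda>i. g (x + t *\<^sub>R dk) $ i - g x $ i) bk \<le> L2 * norm (t *\<^sub>R dk)" if "0 \<le> t" "t \<le> 1" for t
  proof (rule lip[OF xf bk])
    show "supp (t *\<^sub>R dk) \<subseteq> bk" using dsupp by (auto simp: supp_def)
    show "A *v (t *\<^sub>R dk) = 0" using dnull by (simp add: matrix_vector_mult_scaleR)
  qed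
  have desc: "f (x + dk) \<le> f x + g x \<bullet> dk + L2 / 2 * (norm dk)\<^sup>2"
    by (rule descent[OF grad lipb dsupp])
  have A1: "A *v (x + dk) = c" using xf dnull by (simp add: matrix_vector_right_distrib)
  define E where "E = f x + hx - Fs"
  define E' where "E' = f (x + dk) + Hr hi (x + dk) - Fs"
  have E'le: "E' \<le> E + md" using desc unfolding E_def E'_def md_def mr_def by simp
  have E'ge: "0 \<le> E'" using Fle[OF A1] hsep_real[OF hi_pc dkd] Fs unfolding E'_def by simp
  have PLr: "\<mu>2 * E \<le> - L2 * Ir" using PL' Fs unfolding E_def by simp
  have main: "E' \<le> (1 - \<mu>2 / (L2 * N)) * E"
    by (rule arith_final[OF L2_pos _ NmdIr PLr E'le]) (use Npos in simp)
  have rho: "0 < E \<Longrightarrow> 0 \<le> 1 - \<mu>2 / (L2 * N)"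
  proof -
    assume "0 < E"
    moreover have "0 \<le> (1 - \<mu>2 / (L2 * N)) * E" using main E'ge by linarith
    ultimately show ?thesis by (simp add: zero_le_mult_iff)
  qed
  show ?thesis using A1 dkd Fsr main E'ge rho unfolding E_def E'_def N_def hx_def by simp
qed

theorem propositionD2:
  fixes A :: "real^'n::finite^'m::finite"
    and c :: "real^'m"
    and \<tau> :: nat
    and f :: "real^'n \<Rightarrow> real"
    and g :: "real^'n \<Rightarrow> real^'n"
    and hi :: "'n \<Rightarrow> real \<Rightarrow> ereal"
    and L2 \<mu>2 :: real
    and Fstar :: ereal
    and x d :: "nat \<Rightarrow> real^'n"
    and b :: "nat \<Rightarrow> 'n set"
  defines "\<B> \<equiv> {bb :: 'n set. card bb = \<tau>}"
      and "F \<equiv> (\<lambda>y. ereal (f y) + hsep hi y)"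
  assumes rank_A: "rank A = CARD('m)"
    and tau_lo: "CARD('m) + 1 \<le> \<tau>"
    and tau_hi: "\<tau> \<le> CARD('n)"
    and grad: "\<And>y. GDERIV f y :> g y"
    and hi_pc: "\<And>i. proper_convex_ext (hi i)"
    and L2_pos: "L2 > 0"
    and lip: "\<And>y bb e. A *v y = c \<Longrightarrow> bb \<in> \<B> \<Longrightarrow> supp e \<subseteq> bb \<Longrightarrow> A *v e = 0 \<Longrightarrow>
               L2_set (\<lambda>i. g (y + e) $ i - g y $ i) bb \<le> L2 * norm e"
    and Fstar_def: "Fstar = Inf {F y | y. A *v y = c}"
    and mu2_pos: "\<mu>2 > 0"
    and PL: "\<And>y. A *v y = c \<Longrightarrow> hsep hi y < \<infinity> \<Longrightarrow>
               ereal (- L2) * Inf {model g (hsep hi) L2 y e | e. A *v e = 0}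
                 \<ge> ereal \<mu>2 * (F y - Fstar)"
    and x0_feas: "A *v x 0 = c"
    and x0_dom: "hsep hi (x 0) < \<infinity>"
    and step: "\<And>k. x (Suc k) = x k + d k"
    and b_in: "\<And>k. b k \<in> \<B>"
    and d_supp: "\<And>k. supp (d k) \<subseteq> b k"
    and d_null: "\<And>k. A *v d k = 0"
    and gsq: "\<And>k bb e. bb \<in> \<B> \<Longrightarrow> supp e \<subseteq> bb \<Longrightarrow> A *v e = 0 \<Longrightarrow>
               model g (hsep hi) L2 (x k) (d k) \<le> model g (hsep hi) L2 (x k) e"
  shows "\<forall>k. F (x k) - Fstar
           \<le> ereal ((1 - \<mu>2 / (L2 * real (CARD('n) - \<tau> + 1))) ^ k) * (F (x 0) - Fstar)"
proof -
  define \<rho> where "\<rho> = 1 - \<mu>2 / (L2 * real (CARD('n) - \<tau> + 1))"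
  have Fe: "F y = ereal (f y) + hsep hi y" for y by (simp add: F_def)
  have os: "A *v (x k + d k) = c \<and> hsep hi (x k + d k) < \<infinity> \<and> Fstar = ereal (real_of_ereal Fstar) \<and>
    f (x k + d k) + Hr hi (x k + d k) - real_of_ereal Fstar \<le> \<rho> * (f (x k) + Hr hi (x k) - real_of_ereal Fstar) \<and>
    0 \<le> f (x k + d k) + Hr hi (x k + d k) - real_of_ereal Fstar \<and>
    (0 < f (x k) + Hr hi (x k) - real_of_ereal Fstar \<longrightarrow> 0 \<le> \<rho>)"
    if xf: "A *v x k = c" and xd: "hsep hi (x k) < \<infinity>" for k
    unfolding \<rho>_def
  proof (rule one_step[OF tau_lo tau_hi grad hi_pc L2_pos mu2_pos _ _ _ xf xd _ d_supp d_null])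
    show "L2_set (\<lambda>i. g (y + e) $ i - g y $ i) bb \<le> L2 * norm e"
      if "A *v y = c" "card bb = \<tau>" "supp e \<subseteq> bb" "A *v e = 0" for y bb e
      using lip that by (simp add: \<B>_def)
    show "Fstar = Inf {ereal (f y) + hsep hi y | y. A *v y = c}" using Fstar_def by (simp add: F_def)
    show "ereal \<mu>2 * (ereal (f (x k)) + hsep hi (x k) - Fstar)
      \<le> ereal (- L2) * Inf {model g (hsep hi) L2 (x k) e | e. A *v e = 0}"
      using PL[OF xf xd] by (simp add: F_def)
    show "card (b k) = \<tau>" using b_in by (simp add: \<B>_def)
    show "model g (hsep hi) L2 (x k) (d k) \<le> model g (hsep hi) L2 (x k) e"
      if "card bb = \<tau>" "supp e \<subseteq> bb" "A *v e = 0" for bb e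
      using gsq[of bb e k] that by (simp add: \<B>_def)
  qed
  have inv: "A *v x k = c \<and> hsep hi (x k) < \<infinity>" for k
  proof (induction k)
    case 0 then show ?case using x0_feas x0_dom by simp
  next
    case (Suc k) then show ?case using os[of k] step[of k] by simp
  qed
  define Fs where "Fs = real_of_ereal Fstar"
  have FsE: "Fstar = ereal Fs" using os[of 0] inv[of 0] by (simp add: Fs_def)
  define E where "E = (\<lambda>k. f (x k) + Hr hi (x k) - Fs)"
  have Ek: "F (x k) - Fstar = ereal (E k)" for k
    using hsep_real[where hi=hi and y="x k", OF hi_pc] inv[of k] FsE by (simp add: F_def E_def)
  have Es: "E (Suc k) \<le> \<rho> * E k" "0 \<le> E (Suc k)" "0 < E k \<Longrightarrow> 0 \<le> \<rho>" for k
    using os[of k] inv[of k] step[of k] by (auto simp: E_def Fs_def)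
  have E0: "0 \<le> E 0"
  proof -
    have "Fstar \<le> F (x 0)" unfolding Fstar_def using x0_feas by (intro Inf_lower) auto
    then have "0 \<le> F (x 0) - Fstar" using FsE by (cases "F (x 0)") auto
    then show ?thesis using Ek[of 0] by simp
  qed
  have bound: "E k \<le> \<rho> ^ k * E 0" for k
  proof (cases "E 0 = 0")
    case True
    have "E k = 0" for k
    proof (induction k)
      case 0 then show ?case using True .
    next
      case (Suc k) then show ?case using Es(1)[of k] Es(2)[of k] by simp
    qed
    then show ?thesis using True by simp
  next
    case False
    then have "0 < E 0" using E0 by simp
    then have rho0: "0 \<le> \<rho>" using Es(3) by blast
    show ?thesis
    proof (induction k)
      case 0 then show ?case by simp
    next
      case (Suc k)
      have "E (Suc k) \<le> \<rho> * E k" by (rule Es(1))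
      also have "\<dots> \<le> \<rho> * (\<rho> ^ k * E 0)" using Suc rho0 by (intro mult_left_mono) auto
      finally show ?case by (simp add: algebra_simps)
    qed
  qed
  show ?thesis
  proof
    fix k
    have "F (x k) - Fstar = ereal (E k)" by (rule Ek)
    also have "\<dots> \<le> ereal (\<rho> ^ k * E 0)" using bound[of k] by simp
    also have "\<dots> = ereal (\<rho> ^ k) * (F (x 0) - Fstar)" using Ek[of 0] by simp
    finally show "F (x k) - Fstar \<le> ereal ((1 - \<mu>2 / (L2 * real (CARD('n) - \<tau> + 1))) ^ k) * (F (x 0) - Fstar)"
      unfolding \<rho>_def .
  qed
qed

end
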